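(* Let $p\ge2$ and consider the dynamic panel logit AR($p$) model with $T=3$: binary outcomes $Y_{1-p},\dots,Y_0,Y_1,Y_2,Y_3\in\{0,1\}$, regressors $X=(X_1,X_2,X_3)\in\mathbb{R}^{K\times3}$, fixed effect $A\in\mathbb{R}$, with, for $t\in\{1,2,3\}$, $$\Pr(Y_t=1\mid Y_{1-p},\dots,Y_{t-1},X,A)=\frac{\exp(X_t'\beta_0+\sum_{\ell=1}^pY_{t-\ell}\gamma_{0,\ell}+A)}{1+\exp(X_t'\beta_0+\sum_{\ell=1}^pY_{t-\ell}\gamma_{0,\ell}+A)}$$ and true parameters $\beta_0\in\mathbb{R}^K$, $\gamma_0\in\mathbb{R}^p$. Let $Y^{(0)}=(Y_{1-p},\dots,Y_0)$, let $0_r$ and $1_r$ denote the $r$-vectors of zeros and ones, and let $x_{ts}=x_t-x_s$. For $y=(y_1,y_2,y_3)$ define $$m_{(0_p)}=\begin{cases}e^{x_{12}'\beta}&y=(0,1,0),\\ e^{x_{12}'\beta-\gamma_1}&y=(0,1,1),\\ -1&(y_1,y_2)=(1,0),\\0&\text{otherwise},\end{cases}\qquad m_{(0,1_{p-1})}=\begin{cases}-1&(y_1,y_2)=(0,1),\\ e^{x_{21}'\beta-\gamma_1+\gamma_p}&y=(1,0,0),\\ e^{x_{21}'\beta+\gamma_p}&y=(1,0,1),\\0&\text{otherwise},\end{cases}$$ $$m_{(1,0_{p-1})}=\begin{cases}e^{x_{12}'\beta+\gamma_p}&y=(0,1,0),\\ e^{x_{12}'\beta-\gamma_1+\gamma_p}&y=(0,1,1),\\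 -1&(y_1,y_2)=(1,0),\\0&\text{otherwise},\end{cases}\qquad m_{(1_p)}=\begin{cases}-1&(y_1,y_2)=(0,1),\\ e^{x_{21}'\beta-\gamma_1}&y=(1,0,0),\\ e^{x_{21}'\beta}&y=(1,0,1),\\0&\text{otherwise},\end{cases}$$ as functions of $(y,x,\beta,\gamma)$. Then for all $y^{(0)}\in\{0_p,(0,1_{p-1}),(1,0_{p-1}),1_p\}$, $(x_1,x_2)\in\mathbb{R}^{K\times2}$ and $\alpha\in\mathbb{R}$, $$\mathbb{E}\big[m_{y^{(0)}}(Y,X,\beta_0,\gamma_0)\mid Y^{(0)}=y^{(0)},X=(x_1,x_2,x_2),A=\alpha\big]=0,$$ where $Y=(Y_1,Y_2,Y_3)$.
   Context: The joint distribution of $(Y^{(0)},X,A)$ is unrestricted; only the conditional law of $(Y_1,Y_2,Y_3)$ given $(Y^{(0)},X,A)$ is specified by the model. The vector $(0,1_{p-1})$ has first entry (corresponding to $Y_{1-p}$) equal to $0$ and all others equal to $1$; similarly for $(1,0_{p-1})$. *)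

theory Defs
  imports "HOL-Analysis.Analysis"
begin

definition Lam :: "real \<Rightarrow> real" where
  "Lam z = exp z / (1 + exp z)"

text \<open>Full outcome path indexed by time (int): times 1-p..0 from the initial
  history y0, times 1,2,3 from y1,y2,y3 (outcome values are 0 or 1 as reals).\<close>
definition path :: "(int \<Rightarrow> real) \<Rightarrow> real \<Rightarrow> real \<Rightarrow> real \<Rightarrow> int \<Rightarrow> real" where
  "path y0 y1 y2 y3 t = (if t \<le> 0 then y0 t else if t = 1 then y1 else if t = 2 then y2 else y3)"

definition idx :: "nat \<Rightarrow> real^'k \<Rightarrow> (nat \<Rightarrow> real) \<Rightarrow> real \<Rightarrow> (int \<Rightarrow> real) \<Rightarrow> real^'k \<Rightarrow> int \<Rightarrow> real" where
  "idx p \<beta> \<gamma> \<alpha> Y xt t = xt \<bullet> \<beta> + (\<Sum>l=1..p. Y (t - int l) * \<gamma> l) + \<alpha>"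

definition bern :: "real \<Rightarrow> real \<Rightarrow> real" where
  "bern q yt = yt * q + (1 - yt) * (1 - q)"

definition condprob :: "nat \<Rightarrow> real^'k \<Rightarrow> (nat \<Rightarrow> real) \<Rightarrow> (int \<Rightarrow> real)
    \<Rightarrow> real^'k \<Rightarrow> real^'k \<Rightarrow> real^'k \<Rightarrow> real \<Rightarrow> real \<Rightarrow> real \<Rightarrow> real \<Rightarrow> real" where
  "condprob p \<beta> \<gamma> y0 x1 x2 x3 \<alpha> y1 y2 y3 =
     (let Y = path y0 y1 y2 y3 in
      bern (Lam (idx p \<beta> \<gamma> \<alpha> Y x1 1)) y1 *
      bern (Lam (idx p \<beta> \<gamma> \<alpha> Y x2 2)) y2 *
      bern (Lam (idx p \<beta> \<gamma> \<alpha> Y x3 3)) y3)"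

definition condexp :: "nat \<Rightarrow> real^'k \<Rightarrow> (nat \<Rightarrow> real) \<Rightarrow> (int \<Rightarrow> real)
    \<Rightarrow> real^'k \<Rightarrow> real^'k \<Rightarrow> real^'k \<Rightarrow> real \<Rightarrow> (real \<Rightarrow> real \<Rightarrow> real \<Rightarrow> real) \<Rightarrow> real" where
  "condexp p \<beta> \<gamma> y0 x1 x2 x3 \<alpha> m =
     (\<Sum>y1\<in>{0,1}. \<Sum>y2\<in>{0,1}. \<Sum>y3\<in>{0,1}.
        m y1 y2 y3 * condprob p \<beta> \<gamma> y0 x1 x2 x3 \<alpha> y1 y2 y3)"

text \<open>Initial conditions (Y_{1-p},...,Y_0), indexed by time t in {1-p..0}.\<close>
definition y0_0p :: "nat \<Rightarrow> int \<Rightarrow> real" where "y0_0p p t = 0"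
definition y0_01 :: "nat \<Rightarrow> int \<Rightarrow> real" where "y0_01 p t = (if t = 1 - int p then 0 else 1)"
definition y0_10 :: "nat \<Rightarrow> int \<Rightarrow> real" where "y0_10 p t = (if t = 1 - int p then 1 else 0)"
definition y0_1p :: "nat \<Rightarrow> int \<Rightarrow> real" where "y0_1p p t = 1"

definition m_0p :: "nat \<Rightarrow> real^'k \<Rightarrow> real^'k \<Rightarrow> real^'k \<Rightarrow> (nat \<Rightarrow> real) \<Rightarrow> real \<Rightarrow> real \<Rightarrow> real \<Rightarrow> real" where
  "m_0p p x1 x2 \<beta> \<gamma> y1 y2 y3 =
    (if (y1, y2, y3) = (0, 1, 0) then exp ((x1 - x2) \<bullet> \<beta>)
     else if (y1, y2, y3) = (0, 1, 1) then exp ((x1 - x2) \<bullet> \<beta> - \<gamma> 1)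
     else if (y1, y2) = (1, 0) then -1 else 0)"

definition m_01 :: "nat \<Rightarrow> real^'k \<Rightarrow> real^'k \<Rightarrow> real^'k \<Rightarrow> (nat \<Rightarrow> real) \<Rightarrow> real \<Rightarrow> real \<Rightarrow> real \<Rightarrow> real" where
  "m_01 p x1 x2 \<beta> \<gamma> y1 y2 y3 =
    (if (y1, y2) = (0, 1) then -1
     else if (y1, y2, y3) = (1, 0, 0) then exp ((x2 - x1) \<bullet> \<beta> - \<gamma> 1 + \<gamma> p)
     else if (y1, y2, y3) = (1, 0, 1) then exp ((x2 - x1) \<bullet> \<beta> + \<gamma> p)
     else 0)"

definition m_10 :: "nat \<Rightarrow> real^'k \<Rightarrow> real^'k \<Rightarrow> real^'k \<Rightarrow> (nat \<Rightarrow> real) \<Rightarrow> real \<Rightarrow> real \<Rightarrow> real \<Rightarrow> real" where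
  "m_10 p x1 x2 \<beta> \<gamma> y1 y2 y3 =
    (if (y1, y2, y3) = (0, 1, 0) then exp ((x1 - x2) \<bullet> \<beta> + \<gamma> p)
     else if (y1, y2, y3) = (0, 1, 1) then exp ((x1 - x2) \<bullet> \<beta> - \<gamma> 1 + \<gamma> p)
     else if (y1, y2) = (1, 0) then -1 else 0)"

definition m_1p :: "nat \<Rightarrow> real^'k \<Rightarrow> real^'k \<Rightarrow> real^'k \<Rightarrow> (nat \<Rightarrow> real) \<Rightarrow> real \<Rightarrow> real \<Rightarrow> real \<Rightarrow> real" where
  "m_1p p x1 x2 \<beta> \<gamma> y1 y2 y3 =
    (if (y1, y2) = (0, 1) then -1
     else if (y1, y2, y3) = (1, 0, 0) then exp ((x2 - x1) \<bullet> \<beta> - \<gamma> 1)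
     else if (y1, y2, y3) = (1, 0, 1) then exp ((x2 - x1) \<bullet> \<beta>)
     else 0)"

end

theory Submission
  imports Defs
begin

lemma sum_split3: "(p::nat) \<ge> 2 \<Longrightarrow> (\<Sum>l=1..p. f l) = f 1 + f 2 + (\<Sum>l=3..p. (f l::real))"
proof -
  assume "p\<ge>2"
  then have "{1..p} = insert 1 (insert 2 {3..p})" by auto
  then show ?thesis by simp
qed

lemma sum_split2: "(p::nat) \<ge> 2 \<Longrightarrow> (\<Sum>l=2..p. f l) = f 2 + (\<Sum>l=3..p. (f l::real))"
proof -
  assume "p\<ge>2"
  then have "{2..p} = insert 2 {3..p}" by auto
  then show ?thesis by simp
qed

lemma idx1: "idx p \<beta> \<gamma> \<alpha> (path y0 y1 y2 y3) x 1 = x \<bullet> \<beta> + (\<Sum>l=1..p. y0 (1 - int l) * \<gamma> l) + \<alpha>"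
  unfolding idx_def path_def by (intro arg_cong2[where f="(+)"] refl sum.cong) auto

lemma idx2: "p \<ge> 2 \<Longrightarrow> idx p \<beta> \<gamma> \<alpha> (path y0 y1 y2 y3) x 2 = x \<bullet> \<beta> + y1 * \<gamma> 1 + (\<Sum>l=2..p. y0 (2 - int l) * \<gamma> l) + \<alpha>"
proof -
  assume p: "p \<ge> 2"
  have "(\<Sum>l=1..p. path y0 y1 y2 y3 (2 - int l) * \<gamma> l) = path y0 y1 y2 y3 1 * \<gamma> 1 + (\<Sum>l=2..p. path y0 y1 y2 y3 (2 - int l) * \<gamma> l)"
    using p by (subst sum_split3[OF p], subst sum_split2[OF p]) simp
  also have "(\<Sum>l=2..p. path y0 y1 y2 y3 (2 - int l) * \<gamma> l) = (\<Sum>l=2..p. y0 (2 - int l) * \<gamma> l)"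
    unfolding path_def by (rule sum.cong) auto
  finally show ?thesis unfolding idx_def by (simp add: path_def)
qed

lemma idx3: "p \<ge> 2 \<Longrightarrow> idx p \<beta> \<gamma> \<alpha> (path y0 y1 y2 y3) x 3 = x \<bullet> \<beta> + y2 * \<gamma> 1 + y1 * \<gamma> 2 + (\<Sum>l=3..p. y0 (3 - int l) * \<gamma> l) + \<alpha>"
proof -
  assume p: "p \<ge> 2"
  have "(\<Sum>l=1..p. path y0 y1 y2 y3 (3 - int l) * \<gamma> l) = path y0 y1 y2 y3 2 * \<gamma> 1 + path y0 y1 y2 y3 1 * \<gamma> 2 + (\<Sum>l=3..p. path y0 y1 y2 y3 (3 - int l) * \<gamma> l)"
    using p by (subst sum_split3[OF p]) simp
  also have "(\<Sum>l=3..p. path y0 y1 y2 y3 (3 - int l) * \<gamma> l) = (\<Sum>l=3..p. y0 (3 - int l) * \<gamma> l)"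
    unfolding path_def by (rule sum.cong) auto
  finally show ?thesis unfolding idx_def by (simp add: path_def)
qed


lemma exp_ratio: "exp ((x::real) - y) = exp (x + z) / exp (y + z)"
  by (simp add: exp_add exp_diff)
lemma den_nz[simp]: "1 + exp (z::real) \<noteq> 0"
  by (metis add_pos_pos exp_gt_zero zero_less_one less_irrefl)
lemma oml: "1 - Lam z = 1 / (1 + exp z)"
  unfolding Lam_def by (simp add: field_simps)

lemma alg0: "exp u1 / exp u2 * ((1 - Lam u1) * Lam u2 * (1 - Lam u3)) + exp u1/exp u3 * ((1-Lam u1)*Lam u2*Lam u3) + (-(Lam u1*(1-Lam u3)*(1-Lam u4)) - Lam u1*(1-Lam u3)*Lam u4) = 0"
proof -
  have "exp u1 / exp u2 * ((1 - Lam u1) * Lam u2 * (1 - Lam u3)) + exp u1/exp u3 * ((1-Lam u1)*Lam u2*Lam u3) = Lam u1 * (1 - Lam u3)"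
    unfolding Lam_def oml by (simp add: divide_simps) (simp add: algebra_simps)
  then show ?thesis by (simp add: algebra_simps)
qed

lemma alg0': assumes "u1 - u2 = c1" "u1 - u3 = c2"
  shows "exp c1 * ((1 - Lam u1) * Lam u2 * (1 - Lam u3)) + exp c2 * ((1-Lam u1)*Lam u2*Lam u3) + (-(Lam u1*(1-Lam u3)*(1-Lam u4)) - Lam u1*(1-Lam u3)*Lam u4) = 0"
proof -
  have "exp c1 = exp u1 / exp u2" "exp c2 = exp u1 / exp u3" using assms by (auto simp: exp_diff[symmetric])
  then show ?thesis using alg0[of u1 u2 u3 u4] by simp
qed

lemma alg1: assumes "z = v2" "v2 - u1 = c1" "w2 - u1 = c2"
  shows "- ((1 - Lam u1) * Lam v2 * (1 - Lam t)) - (1 - Lam u1) * Lam v2 * Lam t + (exp c1 * (Lam u1 * (1 - Lam w2) * (1 - Lam z)) + exp c2 * (Lam u1 * (1 - Lam w2) * Lam z)) = 0"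
proof -
  have e: "exp c1 = exp v2 / exp u1" "exp c2 = exp w2 / exp u1" using assms by (auto simp: exp_diff[symmetric])
  have "exp v2 / exp u1 * (Lam u1 * (1 - Lam w2) * (1 - Lam v2)) + exp w2 / exp u1 * (Lam u1 * (1 - Lam w2) * Lam v2) = (1 - Lam u1) * Lam v2"
    unfolding Lam_def oml by (simp add: divide_simps) (simp add: algebra_simps)
  then show ?thesis unfolding e assms(1) by (simp add: algebra_simps)
qed

lemma c0p: "(\<Sum>l=1..p. y0_0p p (1 - int l) * \<gamma> l) = 0" "(\<Sum>l=2..p. y0_0p p (2 - int l) * \<gamma> l) = 0"
  "(\<Sum>l=3..p. y0_0p p (3 - int l) * \<gamma> l) = 0" by (simp_all add: y0_0p_def)

lemma case0p:
  fixes p :: nat and \<beta>0 x1 x2 :: "real^'k" and \<gamma>0 :: "nat \<Rightarrow> real" and \<alpha> :: real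
  assumes p: "p \<ge> 2"
  shows "condexp p \<beta>0 \<gamma>0 (y0_0p p) x1 x2 x2 \<alpha> (m_0p p x1 x2 \<beta>0 \<gamma>0) = 0"
proof -
  define a where "a = x1 \<bullet> \<beta>0" 
  define b where "b = x2 \<bullet> \<beta>0" 
  have d: "(x1 - x2) \<bullet> \<beta>0 = a - b" by (simp add: a_def b_def inner_diff_left)
  have r1: "exp (a - b) = exp (a + \<alpha>) / exp (b + \<alpha>)" by (rule exp_ratio)
  have r2: "exp (a - b - \<gamma>0 (Suc 0)) = exp (a + \<alpha>) / exp (b + \<gamma>0 (Suc 0) + \<alpha>)"
    using exp_ratio[of a "b + \<gamma>0 (Suc 0)" \<alpha>] by (simp add: algebra_simps)
  show ?thesis
    unfolding condexp_def condprob_def Let_def idx1 idx2[OF p] idx3[OF p] c0p m_0p_def d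
    apply (simp add: a_def[symmetric] b_def[symmetric] bern_def)
    apply (simp only: r1 r2)
    apply (rule alg0)
    done
qed


lemma c10: "(p::nat) \<ge> 2 \<Longrightarrow> (\<Sum>l=1..p. y0_10 p (1 - int l) * \<gamma> l) = \<gamma> p" "(\<Sum>l=2..p. y0_10 p (2 - int l) * \<gamma> l) = 0"
  "(\<Sum>l=3..p. y0_10 p (3 - int l) * \<gamma> l) = 0"
proof -
  assume "p \<ge> 2"
  have "(\<Sum>l=1..p. y0_10 p (1 - int l) * \<gamma> l) = (\<Sum>l=1..p. if l = p then \<gamma> p else 0)"
    by (rule sum.cong) (auto simp: y0_10_def)
  then show "(\<Sum>l=1..p. y0_10 p (1 - int l) * \<gamma> l) = \<gamma> p" using \<open>p \<ge> 2\<close> by simp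
next
  show "(\<Sum>l=2..p. y0_10 p (2 - int l) * \<gamma> l) = 0" by (rule sum.neutral) (auto simp: y0_10_def)
  show "(\<Sum>l=3..p. y0_10 p (3 - int l) * \<gamma> l) = 0" by (rule sum.neutral) (auto simp: y0_10_def)
qed

lemma c1p: "(p::nat) \<ge> 2 \<Longrightarrow> (\<Sum>l=1..p. y0_1p p (1 - int l) * \<gamma> l) = \<gamma> 1 + \<gamma> 2 + (\<Sum>l=3..p. \<gamma> l)"
  "(p::nat) \<ge> 2 \<Longrightarrow> (\<Sum>l=2..p. y0_1p p (2 - int l) * \<gamma> l) = \<gamma> 2 + (\<Sum>l=3..p. \<gamma> l)"
  "(\<Sum>l=3..p. y0_1p p (3 - int l) * \<gamma> l) = (\<Sum>l=3..p. \<gamma> l)"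
  using sum_split3[of p \<gamma>] sum_split2[of p \<gamma>] by (simp_all add: y0_1p_def)

lemma c01: "(p::nat) \<ge> 2 \<Longrightarrow> (\<Sum>l=1..p. y0_01 p (1 - int l) * \<gamma> l) = \<gamma> 1 + \<gamma> 2 + (\<Sum>l=3..p. \<gamma> l) - \<gamma> p"
  "(p::nat) \<ge> 2 \<Longrightarrow> (\<Sum>l=2..p. y0_01 p (2 - int l) * \<gamma> l) = \<gamma> 2 + (\<Sum>l=3..p. \<gamma> l)"
  "(\<Sum>l=3..p. y0_01 p (3 - int l) * \<gamma> l) = (\<Sum>l=3..p. \<gamma> l)"
proof -
  assume p: "p \<ge> 2"
  have "(\<Sum>l=1..p. y0_01 p (1 - int l) * \<gamma> l) = (\<Sum>l=1..p. \<gamma> l - (if l = p then \<gamma> p else 0))"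
    by (rule sum.cong) (auto simp: y0_01_def)
  also have "\<dots> = (\<Sum>l=1..p. \<gamma> l) - \<gamma> p" using p by (simp add: sum_subtractf)
  finally show "(\<Sum>l=1..p. y0_01 p (1 - int l) * \<gamma> l) = \<gamma> 1 + \<gamma> 2 + (\<Sum>l=3..p. \<gamma> l) - \<gamma> p"
    using p sum_split3[of p \<gamma>] by simp
next
  assume p: "p \<ge> 2"
  have "(\<Sum>l=2..p. y0_01 p (2 - int l) * \<gamma> l) = (\<Sum>l=2..p. \<gamma> l)"
    by (rule sum.cong) (auto simp: y0_01_def)
  then show "(\<Sum>l=2..p. y0_01 p (2 - int l) * \<gamma> l) = \<gamma> 2 + (\<Sum>l=3..p. \<gamma> l)" using p by (simp add: sum_split2)
next
  show "(\<Sum>l=3..p. y0_01 p (3 - int l) * \<gamma> l) = (\<Sum>l=3..p. \<gamma> l)"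
    by (rule sum.cong) (auto simp: y0_01_def)
qed

lemma cases_rest:
  fixes p :: nat and \<beta>0 x1 x2 :: "real^'k" and \<gamma>0 :: "nat \<Rightarrow> real" and \<alpha> :: real
  assumes p: "p \<ge> 2"
  shows "condexp p \<beta>0 \<gamma>0 (y0_10 p) x1 x2 x2 \<alpha> (m_10 p x1 x2 \<beta>0 \<gamma>0) = 0
       \<and> condexp p \<beta>0 \<gamma>0 (y0_01 p) x1 x2 x2 \<alpha> (m_01 p x1 x2 \<beta>0 \<gamma>0) = 0
       \<and> condexp p \<beta>0 \<gamma>0 (y0_1p p) x1 x2 x2 \<alpha> (m_1p p x1 x2 \<beta>0 \<gamma>0) = 0"
proof -
  define a where "a = x1 \<bullet> \<beta>0" 
  define b where "b = x2 \<bullet> \<beta>0" 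
  have d: "(x1 - x2) \<bullet> \<beta>0 = a - b" "(x2 - x1) \<bullet> \<beta>0 = b - a" by (simp_all add: a_def b_def inner_diff_left)
  show ?thesis
    unfolding condexp_def condprob_def Let_def idx1 idx2[OF p] idx3[OF p] c10(1)[OF p] c10(2,3) c01(1,2)[OF p] c01(3) c1p(1,2)[OF p] c1p(3) m_10_def m_01_def m_1p_def d
    apply (simp add: a_def[symmetric] b_def[symmetric] bern_def)
    apply (intro conjI alg0' alg1)
    apply simp_all
    done
qed

theorem lemma5:
  fixes p :: nat and \<beta>0 x1 x2 :: "real^'k" and \<gamma>0 :: "nat \<Rightarrow> real" and \<alpha> :: real
  assumes "p \<ge> 2"
  shows "condexp p \<beta>0 \<gamma>0 (y0_0p p) x1 x2 x2 \<alpha> (m_0p p x1 x2 \<beta>0 \<gamma>0) = 0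
       \<and> condexp p \<beta>0 \<gamma>0 (y0_01 p) x1 x2 x2 \<alpha> (m_01 p x1 x2 \<beta>0 \<gamma>0) = 0
       \<and> condexp p \<beta>0 \<gamma>0 (y0_10 p) x1 x2 x2 \<alpha> (m_10 p x1 x2 \<beta>0 \<gamma>0) = 0
       \<and> condexp p \<beta>0 \<gamma>0 (y0_1p p) x1 x2 x2 \<alpha> (m_1p p x1 x2 \<beta>0 \<gamma>0) = 0"
  using case0p[OF assms] cases_rest[OF assms] by blast

end
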